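(* Let $G=(V,E)$ be an infinite, connected, locally finite, vertex-transitive graph, $o\in V$, $\Gamma\subset\operatorname{Aut}(G)$ a group acting transitively on $V$, and $\mathbb{P}$ a $\Gamma$-invariant and ergodic probability measure on $\mathbb{R}^V$ with $\mathbb{E}|s(o)|<\infty$. If $\mathbb{E}\,s(o)<1$, then $\mathbb{P}\{s\text{ stabilizes}\}=1$.
   Context: $\Delta u(x)=\sum_{y\sim x}(u(y)-u(x))$. $s:V\to\mathbb{R}$ stabilizes if there exists $f:V\to[0,\infty)$ with $s+\Delta f\le1$ pointwise. $\Gamma$-invariance means $T_\alpha s$ has law $\mathbb{P}$ whenever $s$ does, where $(T_\alpha f)(x)=f(\alpha^{-1}x)$, $\alpha\in\Gamma$; ergodicity is with respect to this $\Gamma$-action. *)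

theory Defs
  imports "HOL-Probability.Probability"
begin

text \<open>Graphs: vertex set is the universe of type 'v, adjacency a symmetric, irreflexive relation.\<close>

definition simple_graph :: "('v \<Rightarrow> 'v \<Rightarrow> bool) \<Rightarrow> bool" where
  "simple_graph E \<longleftrightarrow> (\<forall>x y. E x y \<longleftrightarrow> E y x) \<and> (\<forall>x. \<not> E x x)"

definition locally_finite :: "('v \<Rightarrow> 'v \<Rightarrow> bool) \<Rightarrow> bool" where
  "locally_finite E \<longleftrightarrow> (\<forall>x. finite {y. E x y})"

definition graph_connected :: "('v \<Rightarrow> 'v \<Rightarrow> bool) \<Rightarrow> bool" where
  "graph_connected E \<longleftrightarrow> (\<forall>x y. (x, y) \<in> {(a, b). E a b}\<^sup>*)"

definition graph_aut :: "('v \<Rightarrow> 'v \<Rightarrow> bool) \<Rightarrow> ('v \<Rightarrow> 'v) \<Rightarrow> bool" where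
  "graph_aut E \<alpha> \<longleftrightarrow> bij \<alpha> \<and> (\<forall>x y. E x y \<longleftrightarrow> E (\<alpha> x) (\<alpha> y))"

definition vertex_transitive :: "('v \<Rightarrow> 'v \<Rightarrow> bool) \<Rightarrow> bool" where
  "vertex_transitive E \<longleftrightarrow> (\<forall>x y. \<exists>\<alpha>. graph_aut E \<alpha> \<and> \<alpha> x = y)"

definition transitive_aut_group :: "('v \<Rightarrow> 'v \<Rightarrow> bool) \<Rightarrow> ('v \<Rightarrow> 'v) set \<Rightarrow> bool" where
  "transitive_aut_group E \<Gamma> \<longleftrightarrow>
     (\<forall>\<alpha>\<in>\<Gamma>. graph_aut E \<alpha>) \<and> id \<in> \<Gamma> \<and>
     (\<forall>\<alpha>\<in>\<Gamma>. \<forall>\<beta>\<in>\<Gamma>. \<alpha> \<circ> \<beta> \<in> \<Gamma>) \<and> (\<forall>\<alpha>\<in>\<Gamma>. inv \<alpha> \<in> \<Gamma>) \<and>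
     (\<forall>x y. \<exists>\<alpha>\<in>\<Gamma>. \<alpha> x = y)"

definition shift :: "('v \<Rightarrow> 'v) \<Rightarrow> ('v \<Rightarrow> real) \<Rightarrow> ('v \<Rightarrow> real)" where
  "shift \<alpha> f = (\<lambda>x. f (inv \<alpha> x))"

definition laplacian :: "('v \<Rightarrow> 'v \<Rightarrow> bool) \<Rightarrow> ('v \<Rightarrow> real) \<Rightarrow> 'v \<Rightarrow> real" where
  "laplacian E u x = (\<Sum>y\<in>{y. E x y}. u y - u x)"

definition stabilizes :: "('v \<Rightarrow> 'v \<Rightarrow> bool) \<Rightarrow> ('v \<Rightarrow> real) \<Rightarrow> bool" where
  "stabilizes E s \<longleftrightarrow> (\<exists>f :: 'v \<Rightarrow> real. (\<forall>x. f x \<ge> 0) \<and> (\<forall>x. s x + laplacian E f x \<le> 1))"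

definition invariant_measure :: "('v \<Rightarrow> 'v) set \<Rightarrow> ('v \<Rightarrow> real) measure \<Rightarrow> bool" where
  "invariant_measure \<Gamma> P \<longleftrightarrow> (\<forall>\<alpha>\<in>\<Gamma>. distr P P (shift \<alpha>) = P)"

definition ergodic_measure :: "('v \<Rightarrow> 'v) set \<Rightarrow> ('v \<Rightarrow> real) measure \<Rightarrow> bool" where
  "ergodic_measure \<Gamma> P \<longleftrightarrow>
     (\<forall>A\<in>sets P. (\<forall>\<alpha>\<in>\<Gamma>. shift \<alpha> -` A \<inter> space P = A) \<longrightarrow>
        emeasure P A = 0 \<or> emeasure P A = 1)"

end

theory Submission
  imports Defs
begin


definition exc :: "real \<Rightarrow> real" where "exc r = max (r - 1) 0"

fun conf :: "('v \<Rightarrow> 'v \<Rightarrow> bool) \<Rightarrow> real \<Rightarrow> nat \<Rightarrow> ('v \<Rightarrow> real) \<Rightarrow> 'v \<Rightarrow> real" where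
  "conf E d 0 s = s"
| "conf E d (Suc k) s = (\<lambda>x. conf E d k s x - exc (conf E d k s x)
      + (\<Sum>y\<in>{y. E x y}. exc (conf E d k s y)) / d)"

definition odo :: "('v \<Rightarrow> 'v \<Rightarrow> bool) \<Rightarrow> real \<Rightarrow> nat \<Rightarrow> ('v \<Rightarrow> real) \<Rightarrow> 'v \<Rightarrow> real" where
  "odo E d n s x = (\<Sum>k<n. exc (conf E d k s x) / d)"

lemma exc_nonneg: "exc r \<ge> 0" by (simp add: exc_def)
lemma exc_ge: "exc r \<ge> r - 1" by (simp add: exc_def)
lemma exc_min: "r - exc r = min r 1" by (simp add: exc_def)

lemma lap_alt:
  assumes "card {y. E x y} = d"
  shows "laplacian E u x = (\<Sum>y\<in>{y. E x y}. u y) - real d * u x"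
  using assms by (simp add: laplacian_def sum_subtractf)

lemma conf_lap:
  assumes fin: "\<And>x. finite {y. E x y}" and deg: "\<And>x. card {y. E x y} = d" and d0: "d > 0"
  shows "conf E (real d) n s x = s x + laplacian E (odo E (real d) n s) x"
proof (induction n arbitrary: x)
  case 0
  then show ?case by (simp add: odo_def laplacian_def)
next
  case (Suc n)
  have "laplacian E (odo E (real d) (Suc n) s) x
      = laplacian E (odo E (real d) n s) x
        + ((\<Sum>y\<in>{y. E x y}. exc (conf E (real d) n s y)) / d - exc (conf E (real d) n s x))"
    using d0 by (simp add: lap_alt[OF deg] odo_def sum.distrib sum_divide_distrib[symmetric] algebra_simps) (simp add: field_simps)
  then show ?case using Suc by simp
qed

lemma aut_inv:
  assumes "graph_aut E \<alpha>"
  shows "graph_aut E (inv \<alpha>)"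
proof -
  have b: "bij \<alpha>" using assms graph_aut_def by blast
  have "E x y \<longleftrightarrow> E (inv \<alpha> x) (inv \<alpha> y)" for x y
    using assms unfolding graph_aut_def by (metis b bij_inv_eq_iff)
  then show ?thesis using b bij_imp_bij_inv graph_aut_def by blast
qed

lemma conf_shift:
  assumes "graph_aut E \<alpha>"
  shows "conf E d k (shift \<alpha> s) x = conf E d k s (inv \<alpha> x)"
proof (induction k arbitrary: x)
  case 0
  then show ?case by (simp add: shift_def)
next
  case (Suc k)
  have b: "bij \<alpha>" using assms graph_aut_def by blast
  have bi: "bij (inv \<alpha>)" using b bij_imp_bij_inv by blast
  have img: "inv \<alpha> ` {y. E x y} = {z. E (inv \<alpha> x) z}"
    using aut_inv[OF assms] b unfolding graph_aut_def
    by (auto simp: image_iff) (metis bij_inv_eq_iff)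
  have bb: "bij_betw (inv \<alpha>) {y. E x y} {z. E (inv \<alpha> x) z}"
    using bij_betw_subset[OF bi _ img] by simp
  have "(\<Sum>y\<in>{y. E x y}. exc (conf E d k s (inv \<alpha> y))) = (\<Sum>z\<in>{z. E (inv \<alpha> x) z}. exc (conf E d k s z))"
    using sum.reindex_bij_betw[OF bb, of "\<lambda>z. exc (conf E d k s z)"] by simp
  then show ?case using Suc by simp
qed

lemma conf_lower: "conf E d k s x \<ge> min (s x) 1" if "d > 0"
proof (induction k arbitrary: x)
  case 0 then show ?case by simp
next
  case (Suc k)
  have "(\<Sum>y\<in>{y. E x y}. exc (conf E d k s y)) / d \<ge> 0"
    using that by (simp add: sum_nonneg exc_nonneg)
  moreover have "conf E d k s x - exc (conf E d k s x) \<ge> min (s x) 1"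
    using Suc[of x] exc_min[of "conf E d k s x"] by simp
  ultimately show ?case by simp
qed

lemma conf_stay: "d > 0 \<Longrightarrow> conf E d j s x \<ge> 1 \<Longrightarrow> j \<le> k \<Longrightarrow> conf E d k s x \<ge> 1"
proof (induction k)
  case 0 then show ?case by simp
next
  case (Suc k)
  show ?case
  proof (cases "j = Suc k")
    case True then show ?thesis using Suc by simp
  next
    case False
    then have "conf E d k s x \<ge> 1" using Suc by simp
    moreover have "(\<Sum>y\<in>{y. E x y}. exc (conf E d k s y)) / d \<ge> 0"
      using Suc by (simp add: sum_nonneg exc_nonneg)
    ultimately show ?thesis using exc_min[of "conf E d k s x"] by simp
  qed
qed



lemma summ_prop:
  assumes fin: "\<And>x. finite {y. E x y}" and deg: "\<And>x. card {y. E x y} = d" and d0: "d > 0"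
    and exy: "E x y" and sx: "summable (\<lambda>k. exc (conf E (real d) k s x))"
  shows "summable (\<lambda>k. exc (conf E (real d) k s y))"
proof -
  define e where "e k z = exc (conf E (real d) k s z)" for k z
  define B where "B = suminf (\<lambda>k. e k x)"
  have sx': "summable (\<lambda>k. e k x)" using sx by (simp add: e_def)
  have ek: "e k x \<le> B" for k
    using sum_le_suminf[OF sx', of "{k}"] by (simp add: B_def e_def exc_nonneg)
  have ps: "(\<Sum>k<n. e k x) \<le> B" for n
    using sum_le_suminf[OF sx', of "{..<n}"] by (simp add: B_def e_def exc_nonneg)
  have odox: "odo E (real d) n s x \<le> B / d" for n
  proof -
    have "odo E (real d) n s x = (\<Sum>k<n. e k x) / d" by (simp add: odo_def e_def sum_divide_distrib)
    then show ?thesis using ps[of n] d0 by (simp add: divide_right_mono)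
  qed
  have odonn: "odo E (real d) n s z \<ge> 0" for n z
    using d0 by (simp add: odo_def sum_nonneg exc_nonneg)
  have c1: "conf E (real d) n s x \<le> 1 + B" for n
    using exc_ge[of "conf E (real d) n s x"] ek[of n] by (simp add: e_def)
  have "(\<Sum>z\<in>{z. E x z}. odo E (real d) n s z) = conf E (real d) n s x - s x + real d * odo E (real d) n s x" for n
    using conf_lap[OF fin deg d0, where n=n and s=s and x=x] lap_alt[OF deg] by simp
  moreover have "real d * odo E (real d) n s x \<le> B" for n
    using odox[of n] d0 by (simp add: field_simps)
  ultimately have S: "(\<Sum>z\<in>{z. E x z}. odo E (real d) n s z) \<le> 1 + B - s x + B" for n
    using c1[of n] by (smt (verit))
  have "odo E (real d) n s y \<le> 1 + B - s x + B" for n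
  proof -
    have "odo E (real d) n s y \<le> (\<Sum>z\<in>{z. E x z}. odo E (real d) n s z)"
      by (rule member_le_sum) (use exy fin odonn in auto)
    also have "\<dots> \<le> 1 + B - s x + B" by (rule S)
    finally show ?thesis .
  qed
  note Y = this
  have "(\<Sum>k<n. e k y) \<le> real d * (1 + B - s x + B)" for n
  proof -
    have "odo E (real d) n s y = (\<Sum>k<n. e k y) / d" by (simp add: odo_def e_def sum_divide_distrib)
    then have "(\<Sum>k<n. e k y) = real d * odo E (real d) n s y" using d0 by simp
    also have "\<dots> \<le> real d * (1 + B - s x + B)" using Y[of n] d0 by simp
    finally show ?thesis .
  qed
  then have "summable (\<lambda>k. e k y)"
    by (intro summableI_nonneg_bounded) (auto simp: e_def exc_nonneg)
  then show ?thesis by (simp add: e_def)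
qed

lemma summ_all:
  assumes fin: "\<And>x. finite {y. E x y}" and deg: "\<And>x. card {y. E x y} = d" and d0: "d > 0"
    and conn: "graph_connected E" and sx: "summable (\<lambda>k. exc (conf E (real d) k s a))"
  shows "summable (\<lambda>k. exc (conf E (real d) k s b))"
proof -
  have "(a, b) \<in> {(a, b). E a b}\<^sup>*" using conn unfolding graph_connected_def by (rule spec2)
  then show ?thesis
  proof (induction rule: rtrancl_induct)
    case base then show ?case using sx .
  next
    case (step y z)
    then have "E y z" by simp
    then show ?case using summ_prop[where E=E and d=d, OF fin deg d0 _ step.IH] by blast
  qed
qed

lemma stab:
  assumes fin: "\<And>x. finite {y. E x y}" and deg: "\<And>x. card {y. E x y} = d" and d0: "d > 0"
    and sx: "\<And>x. summable (\<lambda>k. exc (conf E (real d) k s x))"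
  shows "stabilizes E s"
proof -
  define f where "f x = suminf (\<lambda>k. exc (conf E (real d) k s x) / d)" for x
  have lim: "(\<lambda>n. odo E (real d) n s x) \<longlonglongrightarrow> f x" for x
    unfolding odo_def f_def by (rule summable_LIMSEQ) (rule summable_divide[OF sx])
  have f0: "f x \<ge> 0" for x
    unfolding f_def using d0 by (intro suminf_nonneg summable_divide[OF sx]) (simp add: exc_nonneg)
  have "s x + laplacian E f x \<le> 1" for x
  proof -
    have L: "(\<lambda>n. s x + laplacian E (odo E (real d) n s) x) \<longlonglongrightarrow> s x + laplacian E f x"
      unfolding laplacian_def by (intro tendsto_intros lim)
    have R: "(\<lambda>n. 1 + exc (conf E (real d) n s x)) \<longlonglongrightarrow> 1 + 0"
      by (intro tendsto_intros summable_LIMSEQ_zero sx)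
    have "s x + laplacian E (odo E (real d) n s) x \<le> 1 + exc (conf E (real d) n s x)" for n
      using conf_lap[OF fin deg d0, where n=n and s=s and x=x] exc_ge[of "conf E (real d) n s x"] by simp
    then show ?thesis using tendsto_le[OF _ R L] by simp
  qed
  then show ?thesis unfolding stabilizes_def using f0 by blast
qed



locale stabset =
  fixes E :: "'v \<Rightarrow> 'v \<Rightarrow> bool" and v0 :: 'v
    and \<Gamma> :: "('v \<Rightarrow> 'v) set" and P :: "('v \<Rightarrow> real) measure"
  assumes sg: "simple_graph E" and inf: "infinite (UNIV :: 'v set)"
    and conn: "graph_connected E" and lf: "locally_finite E"
    and tg: "transitive_aut_group E \<Gamma>"
    and ps: "prob_space P" and sP: "sets P = sets (PiM UNIV (\<lambda>_. borel))"
    and invm: "invariant_measure \<Gamma> P" and erg: "ergodic_measure \<Gamma> P"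
    and int0: "integrable P (\<lambda>s. s v0)"
    and mean: "(\<integral>s. s v0 \<partial>P) < 1"
begin

interpretation prob_space P by (rule ps)

definition "d = card {y. E v0 y}"

lemma fin: "finite {y. E x y}" using lf unfolding locally_finite_def by simp

lemma Gaut: "\<alpha> \<in> \<Gamma> \<Longrightarrow> graph_aut E \<alpha>" using tg unfolding transitive_aut_group_def by simp

lemma Gtrans: "\<exists>\<alpha>\<in>\<Gamma>. \<alpha> x = y" using tg unfolding transitive_aut_group_def by simp

lemma deg: "card {y. E x y} = d"
proof -
  obtain \<alpha> where a: "\<alpha> \<in> \<Gamma>" "\<alpha> x = v0" using Gtrans by blast
  have g: "graph_aut E \<alpha>" using Gaut[OF a(1)] .
  then have b: "bij \<alpha>" by (simp add: graph_aut_def)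
  have "\<alpha> ` {y. E x y} = {y. E v0 y}"
  proof
    show "\<alpha> ` {y. E x y} \<subseteq> {y. E v0 y}" using g a(2) by (auto simp: graph_aut_def)
    show "{y. E v0 y} \<subseteq> \<alpha> ` {y. E x y}"
    proof
      fix z assume "z \<in> {y. E v0 y}"
      then have "E (\<alpha> x) (\<alpha> (inv \<alpha> z))" using a(2) b by (simp add: surj_f_inv_f[OF bij_is_surj[OF b]])
      then have "E x (inv \<alpha> z)" using g by (simp add: graph_aut_def)
      moreover have "z = \<alpha> (inv \<alpha> z)" by (simp add: surj_f_inv_f[OF bij_is_surj[OF b]])
      ultimately show "z \<in> \<alpha> ` {y. E x y}" by blast
    qed
  qed
  moreover have "inj_on \<alpha> {y. E x y}" using b bij_is_inj inj_on_subset by blast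
  ultimately show ?thesis unfolding d_def using card_image by force
qed

lemma d0: "d > 0"
proof -
  have "UNIV \<noteq> {v0}"
  proof
    assume "UNIV = {v0}"
    then have "finite (UNIV::'v set)" by (metis finite.emptyI finite_insert)
    with inf show False by simp
  qed
  then obtain x :: 'v where x: "x \<noteq> v0" by blast
  have "(v0, x) \<in> {(a, b). E a b}\<^sup>*" using conn unfolding graph_connected_def by (rule spec2)
  then obtain y where "(v0, y) \<in> {(a, b). E a b}" using x by (metis converse_rtranclE)
  then have "y \<in> {y. E v0 y}" by simp
  then have "{y. E v0 y} \<noteq> {}" by blast
  then show ?thesis unfolding d_def using fin card_gt_0_iff by blast
qed

lemma spaceP: "space P = UNIV"
  using sets_eq_imp_space_eq[OF sP] by (simp add: space_PiM)

lemma measP: "measurable P N = measurable (PiM UNIV (\<lambda>_. borel)) N"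
  by (rule measurable_cong_sets[OF sP refl])

lemma comp_meas[measurable]: "(\<lambda>s. s x) \<in> borel_measurable P"
  unfolding measP by (rule measurable_component_singleton) simp

lemma exc_meas[measurable]: assumes "g \<in> borel_measurable P" shows "(\<lambda>s. exc (g s)) \<in> borel_measurable P"
  unfolding exc_def by (intro borel_measurable_max borel_measurable_diff) (auto intro: assms)

lemma conf_meas[measurable]: "(\<lambda>s. conf E (real d) k s x) \<in> borel_measurable P"
proof (induction k arbitrary: x)
  case 0 then show ?case by simp
next
  case (Suc k)
  note [measurable] = Suc
  show ?case by simp measurable
qed

lemma shift_meas[measurable]: "shift \<alpha> \<in> measurable P P"
proof -
  have "(\<lambda>s i. s (inv \<alpha> i)) \<in> measurable P (PiM UNIV (\<lambda>_. borel))"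
    by (rule measurable_PiM_single') (simp_all)
  then show ?thesis unfolding shift_def[abs_def] by (subst measurable_cong_sets[OF refl sP])
qed


lemma distr_eq: "\<alpha> \<in> \<Gamma> \<Longrightarrow> distr P P (shift \<alpha>) = P"
  using invm unfolding invariant_measure_def by simp

lemma transfer_int:
  fixes g :: "('v \<Rightarrow> real) \<Rightarrow> real"
  assumes a: "\<alpha> \<in> \<Gamma>" and g[measurable]: "g \<in> borel_measurable P"
  shows "integrable P (\<lambda>s. g (shift \<alpha> s)) = integrable P g"
  using integrable_distr_eq[OF shift_meas g, of \<alpha>] distr_eq[OF a] by simp

lemma transfer_integral:
  fixes g :: "('v \<Rightarrow> real) \<Rightarrow> real"
  assumes a: "\<alpha> \<in> \<Gamma>" and g[measurable]: "g \<in> borel_measurable P"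
  shows "integral\<^sup>L P (\<lambda>s. g (shift \<alpha> s)) = integral\<^sup>L P g"
  using integral_distr[OF shift_meas g, of \<alpha>] distr_eq[OF a] by simp

lemma back_aut:
  obtains \<beta> where "\<beta> \<in> \<Gamma>" "inv \<beta> v0 = x"
proof -
  obtain \<beta> where b: "\<beta> \<in> \<Gamma>" "\<beta> x = v0" using Gtrans by blast
  have "bij \<beta>" using Gaut[OF b(1)] by (simp add: graph_aut_def)
  then have "inv \<beta> v0 = x" using inv_f_eq[OF bij_is_inj, of \<beta> x v0] b(2) by simp
  then show ?thesis using that b(1) by blast
qed

lemma int_comp: "integrable P (\<lambda>s. s x)"
proof -
  obtain \<beta> where b: "\<beta> \<in> \<Gamma>" "inv \<beta> v0 = x" by (rule back_aut)
  have "integrable P (\<lambda>s. shift \<beta> s v0)" using transfer_int[OF b(1), of "\<lambda>s. s v0"] int0 by simp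
  then show ?thesis using b(2) by (simp add: shift_def)
qed

lemma int_exc_of: "integrable P g \<Longrightarrow> integrable P (\<lambda>s. exc (g s))"
  unfolding exc_def by (intro Bochner_Integration.integrable_max Bochner_Integration.integrable_diff) auto

lemma int_conf: "integrable P (\<lambda>s. conf E (real d) k s x)"
proof (induction k arbitrary: x)
  case 0 then show ?case using int_comp by simp
next
  case (Suc k)
  have "integrable P (\<lambda>s. conf E (real d) k s x - exc (conf E (real d) k s x) + (\<Sum>y\<in>{y. E x y}. exc (conf E (real d) k s y)) / real d)"
    by (intro Bochner_Integration.integrable_add Bochner_Integration.integrable_diff Bochner_Integration.integrable_divide_zero Bochner_Integration.integrable_sum int_exc_of Suc)
  then show ?case by simp
qed

lemma int_exc: "integrable P (\<lambda>s. exc (conf E (real d) k s x))"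
  by (rule int_exc_of[OF int_conf])

lemma exc_eq: "integral\<^sup>L P (\<lambda>s. exc (conf E (real d) k s y)) = integral\<^sup>L P (\<lambda>s. exc (conf E (real d) k s v0))"
proof -
  obtain \<beta> where b: "\<beta> \<in> \<Gamma>" "inv \<beta> v0 = y" by (rule back_aut)
  have "integral\<^sup>L P (\<lambda>s. exc (conf E (real d) k (shift \<beta> s) v0)) = integral\<^sup>L P (\<lambda>s. exc (conf E (real d) k s v0))"
    by (rule transfer_integral[OF b(1)]) measurable
  then show ?thesis using conf_shift[OF Gaut[OF b(1)]] b(2) by simp
qed

lemma mean_conf: "integral\<^sup>L P (\<lambda>s. conf E (real d) k s v0) = integral\<^sup>L P (\<lambda>s. s v0)"
proof (induction k)
  case 0 then show ?case by simp
next
  case (Suc k)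
  define I where "I = integral\<^sup>L P (\<lambda>s. exc (conf E (real d) k s v0))"
  have "integral\<^sup>L P (\<lambda>s. conf E (real d) (Suc k) s v0)
      = integral\<^sup>L P (\<lambda>s. (conf E (real d) k s v0 - exc (conf E (real d) k s v0)) + (\<Sum>y\<in>{y. E v0 y}. exc (conf E (real d) k s y)) / real d)"
    by simp
  also have "\<dots> = integral\<^sup>L P (\<lambda>s. conf E (real d) k s v0 - exc (conf E (real d) k s v0)) + integral\<^sup>L P (\<lambda>s. (\<Sum>y\<in>{y. E v0 y}. exc (conf E (real d) k s y)) / real d)"
    by (rule Bochner_Integration.integral_add) (intro Bochner_Integration.integrable_add Bochner_Integration.integrable_diff Bochner_Integration.integrable_divide_zero Bochner_Integration.integrable_sum int_exc int_conf)+
  also have "integral\<^sup>L P (\<lambda>s. conf E (real d) k s v0 - exc (conf E (real d) k s v0)) = integral\<^sup>L P (\<lambda>s. conf E (real d) k s v0) - I"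
    unfolding I_def by (rule Bochner_Integration.integral_diff) (intro int_exc int_conf)+
  also have "integral\<^sup>L P (\<lambda>s. (\<Sum>y\<in>{y. E v0 y}. exc (conf E (real d) k s y)) / real d) = (\<Sum>y\<in>{y. E v0 y}. integral\<^sup>L P (\<lambda>s. exc (conf E (real d) k s y))) / d"
    by (simp only: Bochner_Integration.integral_divide_zero, subst Bochner_Integration.integral_sum) (auto intro: int_exc)
  also have "(\<Sum>y\<in>{y. E v0 y}. integral\<^sup>L P (\<lambda>s. exc (conf E (real d) k s y))) = real d * I"
    unfolding I_def by (subst sum.cong[OF refl exc_eq]) (simp add: deg)
  finally show ?case using Suc d0 by (simp add: I_def)
qed

definition "F = {s. summable (\<lambda>k. exc (conf E (real d) k s v0))}"

lemma F_meas: "F \<in> sets P"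
proof -
  have eq: "F = (\<Union>B::nat. \<Inter>n::nat. {s \<in> space P. (\<Sum>k<n. exc (conf E (real d) k s v0)) \<le> real B})"
  proof (intro set_eqI iffI)
    fix s assume "s \<in> F"
    then have sm: "summable (\<lambda>k. exc (conf E (real d) k s v0))" unfolding F_def by simp
    have "\<exists>B::nat. suminf (\<lambda>k. exc (conf E (real d) k s v0)) \<le> real B" by (rule real_arch_simple)
    then obtain B :: nat where B: "suminf (\<lambda>k. exc (conf E (real d) k s v0)) \<le> real B" ..
    have "(\<Sum>k<n. exc (conf E (real d) k s v0)) \<le> real B" for n
      using sum_le_suminf[OF sm, of "{..<n}"] B by (simp add: exc_nonneg)
    then show "s \<in> (\<Union>B::nat. \<Inter>n::nat. {s \<in> space P. (\<Sum>k<n. exc (conf E (real d) k s v0)) \<le> real B})"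
      unfolding spaceP by (auto intro!: exI[of _ B])
  next
    fix s assume "s \<in> (\<Union>B::nat. \<Inter>n::nat. {s \<in> space P. (\<Sum>k<n. exc (conf E (real d) k s v0)) \<le> real B})"
    then have "\<exists>B::nat. \<forall>n. (\<Sum>k<n. exc (conf E (real d) k s v0)) \<le> real B"
      unfolding spaceP by simp
    then obtain B :: nat where "\<And>n. (\<Sum>k<n. exc (conf E (real d) k s v0)) \<le> real B"
      by (elim exE) (rule that, erule spec)
    then have "summable (\<lambda>k. exc (conf E (real d) k s v0))"
      by (intro summableI_nonneg_bounded[where x="real B"]) (auto simp: exc_nonneg)
    then show "s \<in> F" unfolding F_def by simp
  qed
  have "(\<Union>B::nat. \<Inter>n::nat. {s \<in> space P. (\<Sum>k<n. exc (conf E (real d) k s v0)) \<le> real B}) \<in> sets P"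
    by measurable
  then show ?thesis using eq by simp
qed

lemma F_inv: "\<alpha> \<in> \<Gamma> \<Longrightarrow> shift \<alpha> -` F \<inter> space P = F"
  unfolding F_def spaceP using conf_shift[OF Gaut] summ_all[where E=E and d=d, OF fin deg d0 conn]
  by auto


lemma main: "AE s in P. stabilizes E s"
proof -
  have rd: "real d > 0" using d0 by simp
  have "emeasure P F = 0 \<or> emeasure P F = 1"
    by (rule erg[unfolded ergodic_measure_def, rule_format, OF F_meas]) (rule F_inv)
  moreover have "emeasure P F \<noteq> 0"
  proof
    assume F0: "emeasure P F = 0"
    have Fnull: "F \<in> null_sets P" using F0 F_meas by (simp add: null_sets_def)
    have ae: "AE s in P. s \<notin> F"
      by (rule AE_I'[OF Fnull]) auto
    define h where "h n s = min (conf E (real d) n s v0) 1" for n s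
    have hlim: "AE s in P. (\<lambda>n. h n s) \<longlonglongrightarrow> 1"
      using ae
    proof eventually_elim
      fix s assume "s \<notin> F"
      then have ns: "\<not> summable (\<lambda>k. exc (conf E (real d) k s v0))" by (simp add: F_def)
      have "\<exists>k. exc (conf E (real d) k s v0) \<noteq> 0"
      proof (rule ccontr)
        assume "\<not> (\<exists>k. exc (conf E (real d) k s v0) \<noteq> 0)"
        then have "(\<lambda>k. exc (conf E (real d) k s v0)) = (\<lambda>k. 0)" by auto
        then show False using ns by simp
      qed
      then obtain k where "exc (conf E (real d) k s v0) \<noteq> 0" by (elim exE)
      then have "conf E (real d) k s v0 \<ge> 1" unfolding exc_def by (auto simp: max_def split: if_splits)
      then have "\<forall>n\<ge>k. h n s = 1" using conf_stay[OF rd, of E k s v0] by (auto simp: h_def)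
      then have "eventually (\<lambda>n. h n s = 1) sequentially" by (auto simp: eventually_sequentially)
      then show "(\<lambda>n. h n s) \<longlonglongrightarrow> 1" by (rule tendsto_eventually)
    qed
    have hmeas: "h n \<in> borel_measurable P" for n unfolding h_def by measurable
    have w: "integrable P (\<lambda>s. \<bar>s v0\<bar> + 1)"
      by (intro Bochner_Integration.integrable_add integrable_abs int0) simp
    have bound: "AE s in P. norm (h n s) \<le> \<bar>s v0\<bar> + 1" for n
    proof (rule AE_I2)
      fix s
      have "min (s v0) 1 \<le> h n s" "h n s \<le> 1" using conf_lower[OF rd, where E=E and k=n and s=s and x=v0] by (auto simp: h_def)
      then show "norm (h n s) \<le> \<bar>s v0\<bar> + 1" by (simp add: abs_le_iff) linarith
    qed
    have lim: "(\<lambda>n. integral\<^sup>L P (h n)) \<longlonglongrightarrow> integral\<^sup>L P (\<lambda>s. 1)"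
      by (rule integral_dominated_convergence[OF _ hmeas w hlim bound]) simp
    have hint: "integrable P (h n)" for n
      by (rule integrable_dominated_convergence2[OF _ hmeas w hlim bound]) simp
    have le: "integral\<^sup>L P (h n) \<le> integral\<^sup>L P (\<lambda>s. s v0)" for n
    proof -
      have "integral\<^sup>L P (h n) \<le> integral\<^sup>L P (\<lambda>s. conf E (real d) n s v0)"
        by (rule integral_mono[OF hint int_conf]) (simp add: h_def)
      then show ?thesis using mean_conf by simp
    qed
    have "integral\<^sup>L P (\<lambda>s. 1::real) = 1" by (simp add: prob_space)
    then have "1 \<le> integral\<^sup>L P (\<lambda>s. s v0)"
      using LIMSEQ_le_const2[OF lim] le by auto
    then show False using mean by simp
  qed
  ultimately have "emeasure P F = 1" by simp
  then have "AE s in P. s \<in> F" using AE_in_set_eq_1[OF F_meas] emeasure_eq_measure by simp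
  then show ?thesis
  proof (rule eventually_mono)
    fix s assume "s \<in> F"
    then have "summable (\<lambda>k. exc (conf E (real d) k s v0))" by (simp add: F_def)
    then have "\<And>x. summable (\<lambda>k. exc (conf E (real d) k s x))"
      using summ_all[where E=E and d=d, OF fin deg d0 conn] by simp
    then show "stabilizes E s" by (rule stab[where E=E and d=d, OF fin deg d0])
  qed
qed

end

theorem lemma4p2:
  fixes E :: "'v \<Rightarrow> 'v \<Rightarrow> bool" and v0 :: 'v
    and \<Gamma> :: "('v \<Rightarrow> 'v) set" and P :: "('v \<Rightarrow> real) measure"
  assumes "simple_graph E" and "infinite (UNIV :: 'v set)"
    and "graph_connected E" and "locally_finite E" and "vertex_transitive E"
    and "transitive_aut_group E \<Gamma>"
    and "prob_space P" and "sets P = sets (PiM UNIV (\<lambda>_. borel))"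
    and "invariant_measure \<Gamma> P" and "ergodic_measure \<Gamma> P"
    and "integrable P (\<lambda>s. s v0)"
    and "(\<integral>s. s v0 \<partial>P) < 1"
  shows "AE s in P. stabilizes E s"
  proof -
  interpret stabset E v0 \<Gamma> P
    by (rule stabset.intro) (fact assms)+
  show ?thesis by (rule main)
qed

end
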